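(* Under the standing setup below, the Lie brackets $[e_1,e_2]$, $[e_1,e_3]$ and $[e_2,e_3]$ are (pointwise) linear combinations of $e_2$ and $e_3$.
   Context: Standing setup: $\mathbb{C}P^3(4)$ carries the Fubini–Study metric of constant holomorphic sectional curvature $4$, complex structure $J$, and $\pi:S^7(1)\subset\mathbb{C}^4\to\mathbb{C}P^3(4)$ is the Hopf projection. $M$ is a connected $3$-dimensional non-minimal Lagrangian submanifold of $\mathbb{C}P^3(4)$ attaining equality at every point in $\delta_M\le 2+\tfrac32\|H\|^2$ (here $\delta_M=\tau-\inf K$, $\tau$ the scalar curvature $\sum_{i<j}K(e_i\wedge e_j)$, $H=\frac13\operatorname{trace}h$). Let $h$ be the second fundamental form and $C(X,Y,Z)=\langle h(X,Y),JZ\rangle$. Locally there is an orthonormal frame $e_1,e_2,e_3$ with $C(e_2,e_2,e_2)=-C(e_3,e_3,e_2)=:a$, $C(e_1,e_1,e_1)=4\lambda_2$, $C(e_2,e_2,e_1)=C(e_3,e_3,e_1)=\lambda_2$ with $\lambda_2\neq0$, and all other components zero up to symmetry. $E_0:M\to S^7(1)\subset\mathbb{C}^4$ is a horizontal lift of $M$ (i.e. $\pi\circ E_0$ is the inclusion and $dE_0(X)$ is orthogonal to $E_0$ and $iE_0$ for all $X$), $E_j=dE_0(e_j)$, and $D$ is the flat connection of $\mathbb{C}^4=\mathbb{R}^8$. There is a smooth function $b_1$ such that $D_{E_1}E_1=4\lambda_2 iE_1-E_0$ and $D_{E_j}E_1=(b_1+i\lambda_2)E_j$ for $j=2,3$;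 moreover $e_2(\lambda_2)=e_3(\lambda_2)=e_2(b_1)=e_3(b_1)=0$, $e_1(\lambda_2)=2\lambda_2b_1$ and $e_1(b_1)=-(1+b_1^2+3\lambda_2^2)$. *)

theory Defs
  imports "HOL-Analysis.Analysis"
begin

text \<open>A coordinate chart of M is an open set U of real^3; vector fields on M
  are maps U \<Rightarrow> real^3.  C^4 = R^8 is modelled as complex^4 with the real inner product
  (inner x y = Re (sum_k x_k * conj y_k)), and D (flat connection) is the ordinary
  directional derivative.\<close>

definition dirD :: "('a::real_normed_vector \<Rightarrow> 'b::real_normed_vector) \<Rightarrow> 'a \<Rightarrow> 'a \<Rightarrow> 'b" where
  "dirD f x v = frechet_derivative f (at x) v"

fun iter_dirD :: "('a::real_normed_vector \<Rightarrow> 'b::real_normed_vector) \<Rightarrow> 'a list \<Rightarrow> 'a \<Rightarrow> 'b" where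
  "iter_dirD f [] = f"
| "iter_dirD f (v # vs) = (\<lambda>x. dirD (iter_dirD f vs) x v)"

definition smooth_on :: "'a::real_normed_vector set \<Rightarrow> ('a \<Rightarrow> 'b::real_normed_vector) \<Rightarrow> bool" where
  "smooth_on U f = (\<forall>vs. \<forall>x\<in>U. iter_dirD f vs differentiable (at x))"

definition imul :: "complex^4 \<Rightarrow> complex^4" where
  "imul v = (\<chi> k. \<i> * v $ k)"

definition lie :: "(real^3 \<Rightarrow> real^3) \<Rightarrow> (real^3 \<Rightarrow> real^3) \<Rightarrow> real^3 \<Rightarrow> real^3" where
  "lie X Y x = dirD Y x (X x) - dirD X x (Y x)"

definition liftE :: "(real^3 \<Rightarrow> complex^4) \<Rightarrow> (real^3 \<Rightarrow> real^3) \<Rightarrow> real^3 \<Rightarrow> complex^4" where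
  "liftE E0 X = (\<lambda>x. dirD E0 x (X x))"

text \<open>The prescribed components C(e_j,e_k,e_l) (fully symmetric, j,k,l in {1,2,3}):
  C111 = 4 l2, C222 = a, C332 = -a, C221 = C331 = l2, all others (up to symmetry) zero.\<close>
definition Cval :: "real \<Rightarrow> real \<Rightarrow> nat \<Rightarrow> nat \<Rightarrow> nat \<Rightarrow> real" where
  "Cval a l2 j k l =
     (let cnt = (\<lambda>m. length (filter (\<lambda>t. t = m) [j, k, l])) in
      if (cnt 1, cnt 2, cnt 3) = (3, 0, 0) then 4 * l2
      else if (cnt 1, cnt 2, cnt 3) = (0, 3, 0) then a
      else if (cnt 1, cnt 2, cnt 3) = (0, 1, 2) then - a
      else if (cnt 1, cnt 2, cnt 3) = (1, 2, 0) then l2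
      else if (cnt 1, cnt 2, cnt 3) = (1, 0, 2) then l2
      else 0)"

end

theory Submission
  imports Defs
begin


lemma line_deriv:
  fixes g :: "'a::real_normed_vector \<Rightarrow> real"
  assumes "g differentiable (at (a + t *\<^sub>R v))"
  shows "((\<lambda>s. g (a + s *\<^sub>R v)) has_real_derivative dirD g (a + t *\<^sub>R v) v) (at t)"
proof -
  let ?p = "a + t *\<^sub>R v"
  let ?D = "frechet_derivative g (at ?p)"
  have g: "(g has_derivative ?D) (at ?p)" using assms frechet_derivative_works by blast
  have lin: "linear ?D" using has_derivative_linear[OF g] .
  have l: "((\<lambda>s. a + s *\<^sub>R v) has_derivative (\<lambda>s. s *\<^sub>R v)) (at t)"
    by (auto intro!: derivative_eq_intros)
  have "((\<lambda>s. g (a + s *\<^sub>R v)) has_derivative (\<lambda>s. ?D (s *\<^sub>R v))) (at t)"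
    using has_derivative_compose[OF l g] by simp
  moreover have "(\<lambda>s. ?D (s *\<^sub>R v)) = (\<lambda>s. dirD g ?p v * s)"
    using linear_cmul[OF lin] by (auto simp: dirD_def)
  ultimately show ?thesis unfolding has_field_derivative_def by (metis (no_types))
qed

lemma line_mvt:
  fixes g :: "'a::real_normed_vector \<Rightarrow> real"
  assumes "h > 0" "\<And>t. 0 \<le> t \<Longrightarrow> t \<le> h \<Longrightarrow> g differentiable (at (a + t *\<^sub>R v))"
  shows "\<exists>\<tau>. 0 < \<tau> \<and> \<tau> < h \<and> g (a + h *\<^sub>R v) - g a = h * dirD g (a + \<tau> *\<^sub>R v) v"
proof -
  have "\<exists>z>0. z < h \<and> g (a + h *\<^sub>R v) - g (a + 0 *\<^sub>R v) = (h - 0) * dirD g (a + z *\<^sub>R v) v"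
    by (rule MVT2[OF assms(1)]) (rule line_deriv, rule assms(2), auto)
  then show ?thesis by auto
qed

lemma abs_contra: "\<bar>a - A\<bar> < e \<Longrightarrow> \<bar>b - B\<bar> < e \<Longrightarrow> a = b \<Longrightarrow> e = \<bar>A - B\<bar> / 2 \<Longrightarrow> False"
  for a b A B e :: real
  by (auto simp: abs_if split: if_splits)

lemma schwarz:
  fixes f :: "'a::real_normed_vector \<Rightarrow> real"
  assumes U: "open U" "x \<in> U" and sm: "smooth_on U f"
  shows "iter_dirD f [v,u] x = iter_dirD f [u,v] x"
proof (rule ccontr)
  let ?F1 = "iter_dirD f [v,u]" and ?F2 = "iter_dirD f [u,v]"
  assume neq: "?F1 x \<noteq> ?F2 x"
  define e where "e = \<bar>?F1 x - ?F2 x\<bar> / 2"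
  have e: "e > 0" using neq by (simp add: e_def)
  have dif: "\<And>vs y. y \<in> U \<Longrightarrow> iter_dirD f vs differentiable (at y)"
    using sm by (auto simp: smooth_on_def)
  have "continuous (at x) ?F1" using dif[OF U(2)] differentiable_imp_continuous_within by blast
  then obtain d1 where d1: "d1 > 0" "\<And>y. dist y x < d1 \<Longrightarrow> dist (?F1 y) (?F1 x) < e"
    using e unfolding continuous_at_eps_delta by metis
  have "continuous (at x) ?F2" using dif[OF U(2)] differentiable_imp_continuous_within by blast
  then obtain d2 where d2: "d2 > 0" "\<And>y. dist y x < d2 \<Longrightarrow> dist (?F2 y) (?F2 x) < e"
    using e unfolding continuous_at_eps_delta by metis
  obtain r where r: "r > 0" "ball x r \<subseteq> U" using U open_contains_ball by blast
  define m where "m = min (min d1 d2) r"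
  have m: "m > 0" using d1 d2 r by (simp add: m_def)
  have good: "y \<in> U \<and> \<bar>?F1 y - ?F1 x\<bar> < e \<and> \<bar>?F2 y - ?F2 x\<bar> < e" if "dist y x < m" for y
  proof -
    have "y \<in> ball x r" using that by (simp add: m_def dist_commute)
    then show ?thesis using that d1(2)[of y] d2(2)[of y] r(2) by (auto simp: m_def dist_real_def)
  qed
  define h where "h = m / (2 * (norm u + norm v + 1))"
  have pos: "2 * (norm u + norm v + 1) > 0" by (simp add: add_nonneg_pos)
  then have h: "h > 0" using m by (simp add: h_def)
  have nb: "norm (s *\<^sub>R u + t *\<^sub>R v) < m" if "0 \<le> s" "s \<le> h" "0 \<le> t" "t \<le> h" for s t
  proof -
    have "norm (s *\<^sub>R u + t *\<^sub>R v) \<le> s * norm u + t * norm v"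
      using norm_triangle_ineq[of "s *\<^sub>R u" "t *\<^sub>R v"] that by simp
    also have "\<dots> \<le> h * norm u + h * norm v"
      using that by (intro add_mono mult_right_mono) auto
    also have "\<dots> < h * (2 * (norm u + norm v + 1))"
    proof -
      have a: "0 \<le> h * norm u" "0 \<le> h * norm v" using h by simp_all
      have "h * (2 * (norm u + norm v + 1)) = 2 * (h * norm u) + 2 * (h * norm v) + 2 * h"
        by (simp add: algebra_simps)
      then show ?thesis using a h by linarith
    qed
    also have "\<dots> = m" using h_def pos by simp
    finally show ?thesis .
  qed
  have goodP: "y \<in> U \<and> \<bar>?F1 y - ?F1 x\<bar> < e \<and> \<bar>?F2 y - ?F2 x\<bar> < e"
    if "y = x + s *\<^sub>R u + t *\<^sub>R v \<or> y = x + t *\<^sub>R v + s *\<^sub>R u"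
       "0 \<le> s" "s \<le> h" "0 \<le> t" "t \<le> h" for y s t
  proof -
    have "dist y x = norm (s *\<^sub>R u + t *\<^sub>R v)" using that(1)
      by (auto simp: dist_norm algebra_simps)
    then show ?thesis using good nb that by auto
  qed
  have "\<exists>z>0. z < h \<and> (f ((x + h *\<^sub>R v) + h *\<^sub>R u) - f (x + h *\<^sub>R u))
      - (f ((x + h *\<^sub>R v) + 0 *\<^sub>R u) - f (x + 0 *\<^sub>R u))
      = (h - 0) * (dirD f ((x + h *\<^sub>R v) + z *\<^sub>R u) u - dirD f (x + z *\<^sub>R u) u)"
  proof (rule MVT2[OF h])
    fix s assume s: "0 \<le> s" "s \<le> h"
    have i1: "(x + h *\<^sub>R v) + s *\<^sub>R u \<in> U" using goodP[of _ s h] s h by (auto simp: algebra_simps)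
    have i2: "x + s *\<^sub>R u \<in> U" using goodP[of _ s 0] s h by auto
    show "((\<lambda>s. f ((x + h *\<^sub>R v) + s *\<^sub>R u) - f (x + s *\<^sub>R u)) has_real_derivative
        dirD f ((x + h *\<^sub>R v) + s *\<^sub>R u) u - dirD f (x + s *\<^sub>R u) u) (at s)"
      using dif[OF i1, of "[]"] dif[OF i2, of "[]"] by (intro DERIV_diff line_deriv) auto
  qed
  then obtain s1 where s1: "0 < s1" "s1 < h" "(f ((x + h *\<^sub>R v) + h *\<^sub>R u) - f (x + h *\<^sub>R u))
      - (f ((x + h *\<^sub>R v) + 0 *\<^sub>R u) - f (x + 0 *\<^sub>R u))
      = (h - 0) * (dirD f ((x + h *\<^sub>R v) + s1 *\<^sub>R u) u - dirD f (x + s1 *\<^sub>R u) u)" by blast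
  have "\<exists>\<tau>. 0 < \<tau> \<and> \<tau> < h \<and> iter_dirD f [u] ((x + s1 *\<^sub>R u) + h *\<^sub>R v) - iter_dirD f [u] (x + s1 *\<^sub>R u)
     = h * dirD (iter_dirD f [u]) ((x + s1 *\<^sub>R u) + \<tau> *\<^sub>R v) v"
  proof (rule line_mvt[OF h])
    fix t assume "0 \<le> t" "t \<le> h"
    then show "iter_dirD f [u] differentiable (at (x + s1 *\<^sub>R u + t *\<^sub>R v))"
      using dif[of _ "[u]"] goodP[of "x + s1 *\<^sub>R u + t *\<^sub>R v" s1 t] s1 \<open>0 \<le> t\<close> \<open>t \<le> h\<close> by simp
  qed
  then obtain t1 where t1: "0 < t1" "t1 < h" "dirD f ((x + s1 *\<^sub>R u) + h *\<^sub>R v) u - dirD f (x + s1 *\<^sub>R u) u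
     = h * ?F1 (x + s1 *\<^sub>R u + t1 *\<^sub>R v)" by auto
  define \<Delta> where "\<Delta> = f (x + h *\<^sub>R u + h *\<^sub>R v) - f (x + h *\<^sub>R u) - f (x + h *\<^sub>R v) + f x"
  have p1: "(x + h *\<^sub>R v) + h *\<^sub>R u = x + h *\<^sub>R u + h *\<^sub>R v" "(x + h *\<^sub>R v) + s1 *\<^sub>R u = (x + s1 *\<^sub>R u) + h *\<^sub>R v"
    by (simp_all add: algebra_simps)
  have D1: "\<Delta> = h * h * ?F1 (x + s1 *\<^sub>R u + t1 *\<^sub>R v)"
    using s1(3) t1(3) unfolding p1 \<Delta>_def by simp
  have "\<exists>z>0. z < h \<and> (f ((x + h *\<^sub>R u) + h *\<^sub>R v) - f (x + h *\<^sub>R v))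
      - (f ((x + h *\<^sub>R u) + 0 *\<^sub>R v) - f (x + 0 *\<^sub>R v))
      = (h - 0) * (dirD f ((x + h *\<^sub>R u) + z *\<^sub>R v) v - dirD f (x + z *\<^sub>R v) v)"
  proof (rule MVT2[OF h])
    fix t assume t: "0 \<le> t" "t \<le> h"
    have i1: "(x + h *\<^sub>R u) + t *\<^sub>R v \<in> U" using goodP[of _ h t] t h by (auto simp: algebra_simps)
    have i2: "x + t *\<^sub>R v \<in> U" using goodP[of _ 0 t] t h by auto
    show "((\<lambda>t. f ((x + h *\<^sub>R u) + t *\<^sub>R v) - f (x + t *\<^sub>R v)) has_real_derivative
        dirD f ((x + h *\<^sub>R u) + t *\<^sub>R v) v - dirD f (x + t *\<^sub>R v) v) (at t)"
      using dif[OF i1, of "[]"] dif[OF i2, of "[]"] by (intro DERIV_diff line_deriv) auto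
  qed
  then obtain t2 where t2: "0 < t2" "t2 < h" "(f ((x + h *\<^sub>R u) + h *\<^sub>R v) - f (x + h *\<^sub>R v))
      - (f ((x + h *\<^sub>R u) + 0 *\<^sub>R v) - f (x + 0 *\<^sub>R v))
      = (h - 0) * (dirD f ((x + h *\<^sub>R u) + t2 *\<^sub>R v) v - dirD f (x + t2 *\<^sub>R v) v)" by blast
  have "\<exists>\<sigma>. 0 < \<sigma> \<and> \<sigma> < h \<and> iter_dirD f [v] ((x + t2 *\<^sub>R v) + h *\<^sub>R u) - iter_dirD f [v] (x + t2 *\<^sub>R v)
     = h * dirD (iter_dirD f [v]) ((x + t2 *\<^sub>R v) + \<sigma> *\<^sub>R u) u"
  proof (rule line_mvt[OF h])
    fix s assume "0 \<le> s" "s \<le> h"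
    then show "iter_dirD f [v] differentiable (at (x + t2 *\<^sub>R v + s *\<^sub>R u))"
      using dif[of _ "[v]"] goodP[of "x + t2 *\<^sub>R v + s *\<^sub>R u" s t2] t2 \<open>0 \<le> s\<close> \<open>s \<le> h\<close> by simp
  qed
  then obtain s2 where s2: "0 < s2" "s2 < h" "dirD f ((x + t2 *\<^sub>R v) + h *\<^sub>R u) v - dirD f (x + t2 *\<^sub>R v) v
     = h * ?F2 (x + t2 *\<^sub>R v + s2 *\<^sub>R u)" by auto
  have p2: "(x + h *\<^sub>R u) + t2 *\<^sub>R v = (x + t2 *\<^sub>R v) + h *\<^sub>R u"
    by (simp_all add: algebra_simps)
  have D2: "\<Delta> = h * h * ?F2 (x + t2 *\<^sub>R v + s2 *\<^sub>R u)"
    using t2(3) s2(3) unfolding p2 \<Delta>_def by (simp add: algebra_simps)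
  have eq: "?F1 (x + s1 *\<^sub>R u + t1 *\<^sub>R v) = ?F2 (x + t2 *\<^sub>R v + s2 *\<^sub>R u)"
    using D1 D2 h by simp
  have "\<bar>?F1 (x + s1 *\<^sub>R u + t1 *\<^sub>R v) - ?F1 x\<bar> < e"
    using goodP[of _ s1 t1] s1 t1 by auto
  moreover have "\<bar>?F2 (x + t2 *\<^sub>R v + s2 *\<^sub>R u) - ?F2 x\<bar> < e"
    using goodP[of _ s2 t2] s2 t2 by auto
  ultimately show False using eq e_def abs_contra by blast
qed



lemma dir_expand:
  fixes f :: "real^'n \<Rightarrow> real"
  assumes "f differentiable (at y)"
  shows "dirD f y w = (\<Sum>i\<in>UNIV. w $ i * dirD f y (axis i 1))"
proof -
  have lin: "linear (frechet_derivative f (at y))"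
    using assms frechet_derivative_works has_derivative_linear by blast
  have "dirD f y w = frechet_derivative f (at y) (\<Sum>i\<in>UNIV. w $ i *\<^sub>R axis i 1)"
    using basis_expansion[of w] by (simp add: dirD_def scalar_mult_eq_scaleR)
  also have "\<dots> = (\<Sum>i\<in>UNIV. w $ i * dirD f y (axis i 1))"
    by (simp add: linear_sum[OF lin] linear_cmul[OF lin] dirD_def)
  finally show ?thesis .
qed

lemma dirD_transform:
  assumes "open U" "x \<in> U" "\<And>y. y \<in> U \<Longrightarrow> F y = G y" "(G has_derivative G') (at x)"
  shows "dirD F x w = G' w"
proof -
  have "(F has_derivative G') (at x)"
    by (rule has_derivative_transform_within_open[OF assms(4,1,2)]) (simp add: assms(3))
  then show ?thesis by (simp add: dirD_def frechet_derivative_at[symmetric])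
qed

lemma half_deriv:
  fixes f :: "real^'n \<Rightarrow> real" and Z :: "real^'n \<Rightarrow> real^'n"
  assumes U: "open U" "x \<in> U" and sm: "smooth_on U f" and Z: "Z differentiable (at x)"
  shows "dirD (\<lambda>y. dirD f y (Z y)) x w = dirD f x (dirD Z x w)
     + (\<Sum>i\<in>UNIV. \<Sum>j\<in>UNIV. Z x $ i * w $ j * iter_dirD f [axis j 1, axis i 1] x)"
proof -
  have dif: "\<And>vs y. y \<in> U \<Longrightarrow> iter_dirD f vs differentiable (at y)"
    using sm by (auto simp: smooth_on_def)
  define g where "g i = iter_dirD f [axis i 1]" for i
  define DZ where "DZ = frechet_derivative Z (at x)"
  define Dg where "Dg i = frechet_derivative (g i) (at x)" for i
  have eqU: "dirD f y (Z y) = (\<Sum>i\<in>UNIV. Z y $ i * g i y)" if "y \<in> U" for y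
    using dir_expand[OF dif[OF that, of "[]"], of "Z y"] by (simp add: g_def)
  have DZ: "(Z has_derivative DZ) (at x)" using Z frechet_derivative_works DZ_def by blast
  have Dg: "(g i has_derivative Dg i) (at x)" for i
    unfolding Dg_def g_def using dif[OF U(2)] frechet_derivative_works by blast
  have comp: "((\<lambda>y. Z y $ i) has_derivative (\<lambda>w. DZ w $ i)) (at x)" for i
    using bounded_linear.has_derivative[OF bounded_linear_vec_nth DZ] .
  have der: "((\<lambda>y. \<Sum>i\<in>UNIV. Z y $ i * g i y) has_derivative
      (\<lambda>w. \<Sum>i\<in>UNIV. Z x $ i * Dg i w + DZ w $ i * g i x)) (at x)"
    by (intro has_derivative_sum has_derivative_mult comp Dg)
  have "dirD (\<lambda>y. dirD f y (Z y)) x w = (\<Sum>i\<in>UNIV. Z x $ i * Dg i w + DZ w $ i * g i x)"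
    by (rule dirD_transform[OF U eqU der])
  also have "\<dots> = (\<Sum>i\<in>UNIV. Z x $ i * Dg i w) + (\<Sum>i\<in>UNIV. DZ w $ i * g i x)"
    by (simp add: sum.distrib)
  also have "(\<Sum>i\<in>UNIV. DZ w $ i * g i x) = dirD f x (dirD Z x w)"
    using dir_expand[OF dif[OF U(2), of "[]"], of "DZ w"] by (simp add: g_def DZ_def dirD_def)
  also have "(\<Sum>i\<in>UNIV. Z x $ i * Dg i w)
      = (\<Sum>i\<in>UNIV. \<Sum>j\<in>UNIV. Z x $ i * w $ j * iter_dirD f [axis j 1, axis i 1] x)"
  proof (rule sum.cong[OF refl])
    fix i
    have "Dg i w = (\<Sum>j\<in>UNIV. w $ j * dirD (g i) x (axis j 1))"
      using dir_expand[OF dif[OF U(2), of "[axis i 1]"], of w] by (simp add: Dg_def g_def dirD_def)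
    then show "Z x $ i * Dg i w = (\<Sum>j\<in>UNIV. Z x $ i * w $ j * iter_dirD f [axis j 1, axis i 1] x)"
      by (simp add: sum_distrib_left g_def mult.assoc)
  qed
  finally show ?thesis by simp
qed

lemma lie_deriv:
  fixes f :: "real^3 \<Rightarrow> real" and X Y :: "real^3 \<Rightarrow> real^3"
  assumes U: "open U" "x \<in> U" and sm: "smooth_on U f"
    and X: "X differentiable (at x)" and Y: "Y differentiable (at x)"
  shows "dirD f x (lie X Y x) = dirD (\<lambda>y. dirD f y (Y y)) x (X x) - dirD (\<lambda>y. dirD f y (X y)) x (Y x)"
proof -
  have lin: "linear (frechet_derivative f (at x))"
    using sm U(2) frechet_derivative_works has_derivative_linear
    unfolding smooth_on_def by (metis iter_dirD.simps(1))
  let ?S = "\<lambda>j i. iter_dirD f [axis j 1, axis i 1] x"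
  have sym: "?S j i = ?S i j" for i j using schwarz[OF U sm] .
  have "(\<Sum>i\<in>UNIV. \<Sum>j\<in>UNIV. X x $ i * Y x $ j * ?S j i)
      = (\<Sum>j\<in>UNIV. \<Sum>i\<in>UNIV. X x $ i * Y x $ j * ?S j i)" by (rule sum.swap)
  also have "\<dots> = (\<Sum>i\<in>UNIV. \<Sum>j\<in>UNIV. Y x $ i * X x $ j * ?S j i)"
    using sym by (simp add: mult.commute)
  finally have sw: "(\<Sum>i\<in>UNIV. \<Sum>j\<in>UNIV. X x $ i * Y x $ j * ?S j i)
      = (\<Sum>i\<in>UNIV. \<Sum>j\<in>UNIV. Y x $ i * X x $ j * ?S j i)" .
  have "dirD f x (lie X Y x) = dirD f x (dirD Y x (X x)) - dirD f x (dirD X x (Y x))"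
    unfolding lie_def by (simp only: dirD_def linear_diff[OF lin])
  then show ?thesis
    unfolding half_deriv[OF U sm X] half_deriv[OF U sm Y] using sw by linarith
qed



theorem lemma1:
  fixes U :: "(real^3) set"
    and E0 :: "real^3 \<Rightarrow> complex^4"
    and e :: "nat \<Rightarrow> real^3 \<Rightarrow> real^3"
    and a l2 b1 :: "real^3 \<Rightarrow> real"
  assumes U: "open U" "connected U"
    and smooth: "smooth_on U E0" "\<And>j. j \<in> {1,2,3} \<Longrightarrow> smooth_on U (e j)"
                "smooth_on U a" "smooth_on U l2" "smooth_on U b1"
    and sphere: "\<And>x. x \<in> U \<Longrightarrow> norm (E0 x) = 1"
    and horizontal: "\<And>x v. x \<in> U \<Longrightarrow> inner (dirD E0 x v) (E0 x) = 0"
                    "\<And>x v. x \<in> U \<Longrightarrow> inner (dirD E0 x v) (imul (E0 x)) = 0"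
    and orthonormal: "\<And>x j k. x \<in> U \<Longrightarrow> j \<in> {1,2,3} \<Longrightarrow> k \<in> {1,2,3} \<Longrightarrow>
                        inner (liftE E0 (e j) x) (liftE E0 (e k) x) = (if j = k then 1 else 0)"
    and lagrangian: "\<And>x j k. x \<in> U \<Longrightarrow> j \<in> {1,2,3} \<Longrightarrow> k \<in> {1,2,3} \<Longrightarrow>
                        inner (liftE E0 (e j) x) (imul (liftE E0 (e k) x)) = 0"
    and sff: "\<And>x j k l. x \<in> U \<Longrightarrow> j \<in> {1,2,3} \<Longrightarrow> k \<in> {1,2,3} \<Longrightarrow> l \<in> {1,2,3} \<Longrightarrow>
                inner (dirD (liftE E0 (e k)) x (e j x)) (imul (liftE E0 (e l) x))
                  = Cval (a x) (l2 x) j k l"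
    and l2_nz: "\<And>x. x \<in> U \<Longrightarrow> l2 x \<noteq> 0"
    and DE11: "\<And>x. x \<in> U \<Longrightarrow> dirD (liftE E0 (e 1)) x (e 1 x)
                 = (4 * l2 x) *\<^sub>R imul (liftE E0 (e 1) x) - E0 x"
    and DEj1: "\<And>x j. x \<in> U \<Longrightarrow> j \<in> {2,3} \<Longrightarrow> dirD (liftE E0 (e 1)) x (e j x)
                 = b1 x *\<^sub>R liftE E0 (e j) x + l2 x *\<^sub>R imul (liftE E0 (e j) x)"
    and dl2: "\<And>x. x \<in> U \<Longrightarrow> dirD l2 x (e 2 x) = 0" "\<And>x. x \<in> U \<Longrightarrow> dirD l2 x (e 3 x) = 0"
             "\<And>x. x \<in> U \<Longrightarrow> dirD l2 x (e 1 x) = 2 * l2 x * b1 x"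
    and db1: "\<And>x. x \<in> U \<Longrightarrow> dirD b1 x (e 2 x) = 0" "\<And>x. x \<in> U \<Longrightarrow> dirD b1 x (e 3 x) = 0"
             "\<And>x. x \<in> U \<Longrightarrow> dirD b1 x (e 1 x) = - (1 + (b1 x)\<^sup>2 + 3 * (l2 x)\<^sup>2)"
  shows "\<forall>x\<in>U.
           (\<exists>c2 c3. lie (e 1) (e 2) x = c2 *\<^sub>R e 2 x + c3 *\<^sub>R e 3 x) \<and>
           (\<exists>c2 c3. lie (e 1) (e 3) x = c2 *\<^sub>R e 2 x + c3 *\<^sub>R e 3 x) \<and>
           (\<exists>c2 c3. lie (e 2) (e 3) x = c2 *\<^sub>R e 2 x + c3 *\<^sub>R e 3 x)"
proof
  fix x assume x: "x \<in> U"
  have dif: "\<And>f vs y. smooth_on U f \<Longrightarrow> y \<in> U \<Longrightarrow> iter_dirD f vs differentiable (at y)"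
    by (auto simp: smooth_on_def)
  have ed: "e j differentiable (at x)" if "j \<in> {1,2,3}" for j
    using dif[OF smooth(2)[OF that] x, of "[]"] by simp
  define D0 where "D0 = frechet_derivative E0 (at x)"
  have E0d: "E0 differentiable (at x)" using dif[OF smooth(1) x, of "[]"] by simp
  have lin0: "linear D0" using E0d frechet_derivative_works has_derivative_linear D0_def by blast
  have L: "liftE E0 (e j) x = D0 (e j x)" for j by (simp add: liftE_def dirD_def D0_def)
  have ON: "inner (D0 (e j x)) (D0 (e k x)) = (if j = k then 1 else 0)" if "j \<in> {1,2,3}" "k \<in> {1,2,3}" for j k
    using orthonormal[OF x that] by (simp add: L)
  define M where "M c = c$1 *\<^sub>R e 1 x + c$2 *\<^sub>R e 2 x + c$3 *\<^sub>R e 3 x" for c :: "real^3"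
  have linM: "linear M" by (rule linearI) (simp_all add: M_def algebra_simps)
  have DM: "D0 (M c) = c$1 *\<^sub>R D0 (e 1 x) + c$2 *\<^sub>R D0 (e 2 x) + c$3 *\<^sub>R D0 (e 3 x)" for c
    by (simp add: M_def linear_add[OF lin0] linear_cmul[OF lin0])
  have coef: "inner (D0 (M c)) (D0 (e k x)) = (if k = 1 then c$1 else if k = 2 then c$2 else c$3)" if "k \<in> {1,2,3}" for c k
  proof -
    have "inner (D0 (M c)) (D0 (e k x)) = c$1 * inner (D0 (e 1 x)) (D0 (e k x))
      + c$2 * inner (D0 (e 2 x)) (D0 (e k x)) + c$3 * inner (D0 (e 3 x)) (D0 (e k x))"
      unfolding DM by (simp only: inner_add_left inner_scaleR_left)
    also have "\<dots> = (if k = 1 then c$1 else if k = 2 then c$2 else c$3)"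
    proof -
      consider "k = 1" | "k = 2" | "k = 3" using \<open>k \<in> {1,2,3}\<close> by blast
      then show ?thesis by cases (simp_all add: ON)
    qed
    finally show ?thesis .
  qed
  have "inj M" unfolding linear_injective_0[OF linM]
  proof (intro allI impI)
    fix c assume "M c = 0"
    then have "(if k = 1 then c$1 else if k = 2 then c$2 else c$3) = 0" if "k \<in> {1,2,3}" for k :: nat
      using coef[OF that, of c] lin0 by (simp add: linear_0)
    from this[of 1] this[of 2] this[of 3] show "c = 0" by (simp add: vec_eq_iff forall_3)
  qed
  then have surjM: "surj M" using linM eucl.linear_inj_imp_surj by blast
  define Db where "Db = frechet_derivative b1 (at x)"
  have b1d: "b1 differentiable (at x)" using dif[OF smooth(5) x, of "[]"] by simp
  have l2d: "l2 differentiable (at x)" using dif[OF smooth(4) x, of "[]"] by simp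
  have linb: "linear Db" using b1d frechet_derivative_works has_derivative_linear Db_def by blast
  have pos: "1 + (b1 x)\<^sup>2 + 3 * (l2 x)\<^sup>2 > 0" by (simp add: add_pos_nonneg)
  have key: "\<exists>c2 c3. w = c2 *\<^sub>R e 2 x + c3 *\<^sub>R e 3 x" if w: "dirD b1 x w = 0" for w
  proof -
    obtain c where c: "w = M c" using surjM by (metis surjD)
    have "dirD b1 x w = c$1 * dirD b1 x (e 1 x) + c$2 * dirD b1 x (e 2 x) + c$3 * dirD b1 x (e 3 x)"
      unfolding c M_def dirD_def Db_def[symmetric] by (simp add: linear_add[OF linb] linear_cmul[OF linb])
    then have "c$1 * (- (1 + (b1 x)\<^sup>2 + 3 * (l2 x)\<^sup>2)) = 0" using w db1(1,2,3)[OF x] by (simp only: mult_zero_right add_0_right)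
    then have "c$1 = 0" using pos by (simp only: mult_eq_0_iff neg_equal_0_iff_equal) linarith
    then show ?thesis using c by (auto simp: M_def)
  qed
  have zero: "dirD (\<lambda>y. dirD b1 y (e j y)) x v = 0" if "j \<in> {2,3}" for j v
  proof (rule dirD_transform[OF U(1) x])
    show "\<And>y. y \<in> U \<Longrightarrow> dirD b1 y (e j y) = 0" using that db1 by auto
    show "((\<lambda>y. 0) has_derivative (\<lambda>h. 0)) (at x)" by simp
  qed
  define Dl where "Dl = frechet_derivative l2 (at x)"
  have Hb: "(b1 has_derivative Db) (at x)" using b1d frechet_derivative_works Db_def by blast
  have Hl: "(l2 has_derivative Dl) (at x)" using l2d frechet_derivative_works Dl_def by blast
  have one: "dirD (\<lambda>y. dirD b1 y (e 1 y)) x (e j x) = 0" if "j \<in> {2,3}" for j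
  proof -
    have HD: "((\<lambda>y. - (1 + (b1 y)\<^sup>2 + 3 * (l2 y)\<^sup>2)) has_derivative
        (\<lambda>h. - (2 * b1 x * Db h + 3 * (2 * l2 x * Dl h)))) (at x)"
      using Hb Hl by (auto intro!: derivative_eq_intros simp: power2_eq_square algebra_simps)
    have "dirD (\<lambda>y. dirD b1 y (e 1 y)) x (e j x) = - (2 * b1 x * Db (e j x) + 3 * (2 * l2 x * Dl (e j x)))"
      using dirD_transform[OF U(1) x _ HD, of "\<lambda>y. dirD b1 y (e 1 y)" "e j x"] db1(3) by simp
    also have "\<dots> = 0"
    proof -
      have "Db (e j x) = 0" "Dl (e j x) = 0"
        using that db1(1,2)[OF x] dl2(1,2)[OF x] unfolding Db_def Dl_def dirD_def by auto
      then show ?thesis by simp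
    qed
    finally show ?thesis .
  qed
  have "dirD b1 x (lie (e 1) (e 2) x) = 0"
    using lie_deriv[OF U(1) x smooth(5) ed[of 1] ed[of 2]] zero[of 2] one[of 2] by simp
  moreover have "dirD b1 x (lie (e 1) (e 3) x) = 0"
    using lie_deriv[OF U(1) x smooth(5) ed[of 1] ed[of 3]] zero[of 3] one[of 3] by simp
  moreover have "dirD b1 x (lie (e 2) (e 3) x) = 0"
    using lie_deriv[OF U(1) x smooth(5) ed[of 2] ed[of 3]] zero[of 2] zero[of 3] by simp
  ultimately show "(\<exists>c2 c3. lie (e 1) (e 2) x = c2 *\<^sub>R e 2 x + c3 *\<^sub>R e 3 x) \<and>
           (\<exists>c2 c3. lie (e 1) (e 3) x = c2 *\<^sub>R e 2 x + c3 *\<^sub>R e 3 x) \<and>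
           (\<exists>c2 c3. lie (e 2) (e 3) x = c2 *\<^sub>R e 2 x + c3 *\<^sub>R e 3 x)"
    using key by blast
qed

end
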